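(* Let $g\in H(\mathbb{D})$ be such that $\log(g)\in\mathcal{B}$, let $\nu$ be an analytic weight and let $\mu$ be an arbitrary weight. Then $S_g: \mathcal{B}^{\infty}_\nu\rightarrow H^{\infty}_\mu$ is bounded if and only if $$\sup_{0\leq t<1}\ \sup_{0\leq\theta<2\pi}\mu(t)\int_0^t\frac{|g(re^{i\theta})|}{\nu(r)}\,dr<+\infty\,.$$
   Context: $\mathbb{D}$ is the open unit disk and $H(\mathbb{D})$ the space of analytic functions on $\mathbb{D}$. A weight is a non-negative continuous function $\nu$ on $\mathbb{D}$ with $\nu(z)=\nu(|z|)$ for all $z$, which is decreasing in $|z|$; we write $\nu(r)$ for its value at $|z|=r$. For a weight $\nu$: $H^{\infty}_\nu=\{f\in H(\mathbb{D}): \sup_{z}\nu(z)|f(z)|<\infty\}$, $\mathcal{B}^{\infty}_\nu=\{f\in H(\mathbb{D}): |f(0)|+\sup_{z}\nu(z)|f'(z)|<\infty\}$. The Bloch space is $\mathcal{B}=\{f\in H(\mathbb{D}): |f(0)|+\sup_{z}(1-|z|^2)|f'(z)|<\infty\}$; "$\log(g)\in\mathcal{B}$" means $g$ has no zeros in $\mathbb{D}$ and an analytic branch of $\log g$ belongs to $\mathcal{B}$. A weight $\nu$ is analytic if $\nu(z)=1/F(|z|)$ for some $F\in H(\mathbb{D})$ with $|F(z)|\leq F(|z|)$ for all $z$. For $g\in H(\mathbb{D})$, $(S_gf)(z)=\int_0^z f'(\omega)g(\omega)\,d\omega$. *)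

theory Defs
  imports "HOL-Complex_Analysis.Complex_Analysis"
begin

abbreviation unit_disc :: "complex set" where
  "unit_disc \<equiv> ball 0 1"

definition is_weight :: "(complex \<Rightarrow> real) \<Rightarrow> bool" where
  "is_weight \<nu> \<longleftrightarrow>
     continuous_on unit_disc \<nu> \<and>
     (\<forall>z\<in>unit_disc. 0 \<le> \<nu> z) \<and>
     (\<forall>z\<in>unit_disc. \<nu> z = \<nu> (complex_of_real (norm z))) \<and>
     (\<forall>z\<in>unit_disc. \<forall>w\<in>unit_disc. norm z \<le> norm w \<longrightarrow> \<nu> w \<le> \<nu> z)"

text \<open>Analytic weight: nu(z) = 1 / F(|z|) with F analytic on the disc and |F(z)| <= F(|z|).\<close>
definition analytic_weight :: "(complex \<Rightarrow> real) \<Rightarrow> bool" where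
  "analytic_weight \<nu> \<longleftrightarrow> is_weight \<nu> \<and>
     (\<exists>F. F holomorphic_on unit_disc \<and>
        (\<forall>z\<in>unit_disc. complex_of_real (\<nu> z) * F (complex_of_real (norm z)) = 1) \<and>
        (\<forall>z\<in>unit_disc. norm (F z) \<le> Re (F (complex_of_real (norm z)))))"

definition H_inf_w :: "(complex \<Rightarrow> real) \<Rightarrow> (complex \<Rightarrow> complex) set" where
  "H_inf_w \<mu> = {f. f holomorphic_on unit_disc \<and>
     (\<exists>C. \<forall>z\<in>unit_disc. \<mu> z * norm (f z) \<le> C)}"

definition B_inf_w :: "(complex \<Rightarrow> real) \<Rightarrow> (complex \<Rightarrow> complex) set" where
  "B_inf_w \<nu> = {f. f holomorphic_on unit_disc \<and>
     (\<exists>C. \<forall>z\<in>unit_disc. \<nu> z * norm (deriv f z) \<le> C)}"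

definition B_inf_norm :: "(complex \<Rightarrow> real) \<Rightarrow> (complex \<Rightarrow> complex) \<Rightarrow> real" where
  "B_inf_norm \<nu> f = norm (f 0) + (SUP z\<in>unit_disc. \<nu> z * norm (deriv f z))"

definition bloch :: "(complex \<Rightarrow> complex) set" where
  "bloch = {f. f holomorphic_on unit_disc \<and>
     (\<exists>C. \<forall>z\<in>unit_disc. (1 - (norm z)^2) * norm (deriv f z) \<le> C)}"

definition log_in_bloch :: "(complex \<Rightarrow> complex) \<Rightarrow> bool" where
  "log_in_bloch g \<longleftrightarrow> (\<exists>h\<in>bloch. \<forall>z\<in>unit_disc. exp (h z) = g z)"

definition S_op :: "(complex \<Rightarrow> complex) \<Rightarrow> (complex \<Rightarrow> complex) \<Rightarrow> complex \<Rightarrow> complex" where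
  "S_op g f z = contour_integral (linepath 0 z) (\<lambda>w. deriv f w * g w)"

definition S_bounded :: "(complex \<Rightarrow> complex) \<Rightarrow> (complex \<Rightarrow> real) \<Rightarrow> (complex \<Rightarrow> real) \<Rightarrow> bool" where
  "S_bounded g \<nu> \<mu> \<longleftrightarrow> (\<exists>C. \<forall>f\<in>B_inf_w \<nu>. S_op g f \<in> H_inf_w \<mu> \<and>
      (\<forall>z\<in>unit_disc. \<mu> z * norm (S_op g f z) \<le> C * B_inf_norm \<nu> f))"

end

theory Submission
  imports Defs
begin

definition gk :: "real \<Rightarrow> complex \<Rightarrow> complex" where
  "gk a w = exp (- (complex_of_real a) * w^2)"

lemma gk_cont[continuous_intros]: "continuous_on S (gk a)"
  unfolding gk_def by (intro continuous_intros)

lemma gk_cont'[continuous_intros]: "continuous_on S f \<Longrightarrow> continuous_on S (\<lambda>x. gk a (f x))"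
  unfolding gk_def by (intro continuous_intros)

lemma norm_gk: "norm (gk a (complex_of_real u + \<i> * complex_of_real y)) = exp (- a * u^2 + a * y^2)"
  unfolding gk_def norm_exp_eq_Re by (simp add: power2_eq_square algebra_simps)

lemma gk_real: "gk a (complex_of_real u) = complex_of_real (exp (- a * u^2))"
  unfolding gk_def by (simp flip: exp_of_real)

lemma cnj_gk: "cnj (gk a (complex_of_real u + \<i> * complex_of_real y)) = gk a (complex_of_real (-u) + \<i> * complex_of_real y)"
  unfolding gk_def exp_cnj by (simp add: power2_eq_square algebra_simps)

lemma shift_refl: "integral {x-R..x+R} (\<lambda>\<tau>. k (x - \<tau>)) = integral {-R..R} (k::real \<Rightarrow> 'a::banach)"
proof -
  have "integral {x-R..x+R} (\<lambda>\<tau>. k (x - \<tau>)) = integral {-(x+R)..-(x-R)} (\<lambda>\<tau>. k (x - (-\<tau>)))"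
    by (rule Henstock_Kurzweil_Integration.integral_reflect_real[symmetric, where f = "\<lambda>\<tau>. k (x - \<tau>)"])
  also have "\<dots> = integral {-R-x..R-x} (k \<circ> (+) x)" by (simp add: o_def algebra_simps)
  also have "\<dots> = integral {-R..R} k" by (subst integral_shift_Icc_real) simp
  finally show ?thesis .
qed

lemma Im_int_gk: "Im (integral {-R..R} (\<lambda>u. gk a (complex_of_real u + \<i> * complex_of_real y))) = 0"
proof -
  let ?f = "\<lambda>u. gk a (complex_of_real u + \<i> * complex_of_real y)"
  have "cnj (integral {-R..R} ?f) = integral {-R..R} (\<lambda>u. ?f (-u))"
    by (simp only: integral_cnj cnj_gk)
  also have "\<dots> = integral {-R..R} ?f" using Henstock_Kurzweil_Integration.integral_reflect_real[of R "-R" ?f] by (simp only: minus_minus)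
  finally have e: "cnj (integral {-R..R} ?f) = integral {-R..R} ?f" .
  have "Im (cnj (integral {-R..R} ?f)) = Im (integral {-R..R} ?f)" using e by (rule arg_cong)
  then show ?thesis by simp
qed

lemma int_abs_gauss:
  assumes a: "(a::real) > 0" and R: "0 \<le> R"
  shows "((\<lambda>u::real. \<bar>u\<bar> * exp (- a * u^2)) has_integral (1 - exp (- a * R^2)) / a) {-R..R}"
proof -
  have d1: "((\<lambda>u. - exp (- a * u^2) / (2*a)) has_vector_derivative u * exp (- a * u^2)) (at u within S)" for u S
    using a by (auto intro!: derivative_eq_intros simp: has_real_derivative_iff_has_vector_derivative[symmetric] field_simps)
  have d2: "((\<lambda>u. exp (- a * u^2) / (2*a)) has_vector_derivative - u * exp (- a * u^2)) (at u within S)" for u S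
    using a by (auto intro!: derivative_eq_intros simp: has_real_derivative_iff_has_vector_derivative[symmetric] field_simps)
  have i1: "((\<lambda>u. u * exp (- a * u^2)) has_integral (1 - exp (- a * R^2)) / (2*a)) {0..R}"
    using fundamental_theorem_of_calculus[OF R d1] a by (simp add: field_simps)
  have i1': "((\<lambda>u. \<bar>u\<bar> * exp (- a * u^2)) has_integral (1 - exp (- a * R^2)) / (2*a)) {0..R}"
    by (rule has_integral_eq[OF _ i1]) simp
  have i2: "((\<lambda>u. - u * exp (- a * u^2)) has_integral (1 - exp (- a * R^2)) / (2*a)) {-R..0}"
    using fundamental_theorem_of_calculus[of "-R" 0, OF _ d2] R a by (simp add: field_simps)
  have i2': "((\<lambda>u. \<bar>u\<bar> * exp (- a * u^2)) has_integral (1 - exp (- a * R^2)) / (2*a)) {-R..0}"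
    by (rule has_integral_eq[OF _ i2]) simp
  from has_integral_combine[OF _ _ i2' i1'] R show ?thesis by (simp add: field_simps)
qed

lemma lip_cont:
  assumes "\<And>x y. \<bar>q x - q y\<bar> \<le> L * \<bar>x - y\<bar>" "0 \<le> L"
  shows "continuous_on S (q::real\<Rightarrow>real)"
proof -
  have "L-lipschitz_on S q" unfolding lipschitz_on_def dist_real_def using assms by auto
  then show ?thesis by (rule lipschitz_on_continuous_on)
qed

lemma key_bound:
  fixes q :: "real \<Rightarrow> real" and w :: complex and R' a L :: real
  assumes lip: "\<And>x y. \<bar>q x - q y\<bar> \<le> L * \<bar>x - y\<bar>" and L: "0 \<le> L"
    and a: "a > 0" and R': "0 \<le> R'"
  shows "norm (integral {Re w - R'..Re w + R'} (\<lambda>\<tau>. of_real (q \<tau> - q (Re w)) * gk a (w - of_real \<tau>)))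
          \<le> L * exp (a * (Im w)^2) / a"
proof -
  define x where "x = Re w"
  define y where "y = Im w"
  have w: "w - of_real \<tau> = of_real (x - \<tau>) + \<i> * of_real y" for \<tau>
    unfolding x_def y_def by (simp add: complex_eq_iff)
  have qc: "continuous_on S q" for S using lip_cont[OF lip L] .
  let ?f = "\<lambda>\<tau>. of_real (q \<tau> - q x) * gk a (w - of_real \<tau>)"
  let ?g = "\<lambda>\<tau>. L * exp (a * y^2) * (\<bar>x - \<tau>\<bar> * exp (- a * (x - \<tau>)^2))"
  have fi: "?f integrable_on {x - R'..x + R'}"
    by (intro integrable_continuous_interval continuous_intros qc)
  have gi: "?g integrable_on {x - R'..x + R'}"
    by (intro integrable_continuous_interval continuous_intros)
  have "norm (integral {x - R'..x + R'} ?f) \<le> integral {x - R'..x + R'} ?g"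
  proof (rule integral_norm_bound_integral[OF fi gi])
    fix \<tau> assume "\<tau> \<in> {x - R'..x + R'}"
    have "norm (?f \<tau>) = \<bar>q \<tau> - q x\<bar> * exp (- a * (x - \<tau>)^2 + a * y^2)"
      unfolding w norm_mult norm_gk norm_of_real by simp
    also have "\<dots> \<le> (L * \<bar>x - \<tau>\<bar>) * exp (- a * (x - \<tau>)^2 + a * y^2)"
      using lip[of \<tau> x] by (intro mult_right_mono) (auto simp: abs_minus_commute)
    also have "\<dots> = ?g \<tau>" by (subst exp_add) (simp add: mult_ac)
    finally show "norm (?f \<tau>) \<le> ?g \<tau>" .
  qed
  also have "integral {x - R'..x + R'} ?g = L * exp (a * y^2) * integral {x - R'..x + R'} (\<lambda>\<tau>. \<bar>x - \<tau>\<bar> * exp (- a * (x - \<tau>)^2))"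
    by simp
  also have "integral {x - R'..x + R'} (\<lambda>\<tau>. \<bar>x - \<tau>\<bar> * exp (- a * (x - \<tau>)^2)) = integral {-R'..R'} (\<lambda>u. \<bar>u\<bar> * exp (- a * u^2))"
    by (rule shift_refl[where k = "\<lambda>u. \<bar>u\<bar> * exp (- a * u^2)"])
  also have "\<dots> = (1 - exp (- a * R'^2)) / a"
    using int_abs_gauss[OF a R'] by (rule integral_unique)
  also have "L * exp (a * y^2) * ((1 - exp (- a * R'^2)) / a) \<le> L * exp (a * y^2) / a"
  proof -
    have "(1 - exp (- a * R'^2)) / a \<le> 1 / a" using a by (simp add: divide_right_mono)
    then have "L * exp (a * y^2) * ((1 - exp (- a * R'^2)) / a) \<le> L * exp (a * y^2) * (1/a)"
      using L by (intro mult_left_mono) auto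
    then show ?thesis by simp
  qed
  finally show ?thesis unfolding x_def y_def .
qed

lemma integral_mult_right_HK:
  fixes c :: "'a :: real_normed_algebra"
  assumes "f integrable_on S"
  shows "integral S (\<lambda>x. c * f x) = c * integral S f"
  using has_integral_mult_right[OF integrable_integral[OF assms]] by (rule integral_unique)

lemma decomp:
  fixes q :: "real \<Rightarrow> real" and w :: complex and R' a A B :: real
  assumes qc: "continuous_on UNIV q"
    and supp: "\<forall>x. x \<notin> {A..B} \<longrightarrow> q x = 0"
    and sub: "{A..B} \<subseteq> {Re w - R'..Re w + R'}"
  shows "integral {A..B} (\<lambda>\<tau>. of_real (q \<tau>) * gk a (w - of_real \<tau>))
       = integral {Re w - R'..Re w + R'} (\<lambda>\<tau>. of_real (q \<tau> - q (Re w)) * gk a (w - of_real \<tau>))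
         + of_real (q (Re w)) * integral {-R'..R'} (\<lambda>u. gk a (of_real u + \<i> * of_real (Im w)))"
proof -
  define x where "x = Re w"
  define y where "y = Im w"
  have weq: "w - of_real \<tau> = of_real (x - \<tau>) + \<i> * of_real y" for \<tau>
    unfolding x_def y_def by (simp add: complex_eq_iff)
  have qc': "continuous_on S q" for S using qc continuous_on_subset by blast
  let ?F = "\<lambda>\<tau>. of_real (q \<tau>) * gk a (w - of_real \<tau>)"
  let ?G = "\<lambda>\<tau>. gk a (w - of_real \<tau>)"
  let ?f1 = "\<lambda>\<tau>. of_real (q \<tau> - q x) * gk a (w - of_real \<tau>)"
  have Fi: "?F integrable_on {A..B}"
    by (intro integrable_continuous_interval continuous_intros qc')
  have "(?F has_integral integral {A..B} ?F) {Re w - R'..Re w + R'}"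
    by (rule has_integral_on_superset[OF integrable_integral[OF Fi] _ sub]) (simp add: supp)
  then have e1: "integral {A..B} ?F = integral {x - R'..x + R'} ?F"
    unfolding x_def by (simp add: integral_unique)
  have f1i: "?f1 integrable_on {x - R'..x + R'}"
    by (intro integrable_continuous_interval continuous_intros qc')
  have Gi: "?G integrable_on {x - R'..x + R'}"
    by (intro integrable_continuous_interval continuous_intros)
  have "integral {x - R'..x + R'} ?F = integral {x - R'..x + R'} (\<lambda>\<tau>. ?f1 \<tau> + of_real (q x) * ?G \<tau>)"
    by (rule integral_cong) (simp add: algebra_simps)
  also have "\<dots> = integral {x - R'..x + R'} ?f1 + of_real (q x) * integral {x - R'..x + R'} ?G"
    using f1i Gi by (simp add: integral_add integrable_on_mult_right integral_mult_right_HK)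
  also have "integral {x - R'..x + R'} ?G = integral {-R'..R'} (\<lambda>u. gk a (of_real u + \<i> * of_real y))"
  proof -
    have "integral {x - R'..x + R'} ?G = integral {x - R'..x + R'} (\<lambda>\<tau>. gk a (of_real (x - \<tau>) + \<i> * of_real y))"
      by (simp only: weq)
    also have "\<dots> = integral {-R'..R'} (\<lambda>u. gk a (of_real u + \<i> * of_real y))"
      by (rule shift_refl[where k = "\<lambda>u. gk a (of_real u + \<i> * of_real y)"])
    finally show ?thesis .
  qed
  finally have e2: "integral {x - R'..x + R'} ?F = integral {x - R'..x + R'} ?f1 + of_real (q x) * integral {-R'..R'} (\<lambda>u. gk a (of_real u + \<i> * of_real y))" .
  have "integral {A..B} ?F = integral {x - R'..x + R'} ?f1 + of_real (q x) * integral {-R'..R'} (\<lambda>u. gk a (of_real u + \<i> * of_real y))"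
    using e1 e2 by (rule trans)
  then show ?thesis unfolding x_def y_def .
qed

lemma c_lower:
  fixes b R :: real
  assumes b: "1 \<le> b" and R: "1 \<le> R"
  shows "2 / (b * exp 1) \<le> integral {-R..R} (\<lambda>u. exp (- (b^2) * u^2))"
proof -
  have "1/b \<le> 1" using b by simp
  then have sub: "{-(1/b)..1/b} \<subseteq> {-R..R}" using R by auto
  have "integral {-(1/b)..1/b} (\<lambda>u. exp (-1)) \<le> integral {-(1/b)..1/b} (\<lambda>u. exp (- (b^2) * u^2))"
  proof (rule integral_le)
    fix u assume u: "u \<in> {-(1/b)..1/b}"
    then have "\<bar>u\<bar> \<le> 1/b" by auto
    then have "\<bar>u\<bar> * b \<le> 1" using b by (simp add: field_simps)
    then have "(\<bar>u\<bar> * b)^2 \<le> 1^2" using b by (intro power_mono) auto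
    then have "b^2 * u^2 \<le> 1" by (simp add: power_mult_distrib mult_ac)
    then show "exp (-1) \<le> exp (- (b^2) * u^2)" by simp
  qed (auto intro!: integrable_continuous_interval continuous_intros)
  also have "\<dots> \<le> integral {-R..R} (\<lambda>u. exp (- (b^2) * u^2))"
    by (rule integral_subset_le[OF sub]) (auto intro!: integrable_continuous_interval continuous_intros)
  finally have "integral {-(1/b)..1/b} (\<lambda>u. exp (-1::real)) \<le> integral {-R..R} (\<lambda>u. exp (- (b^2) * u^2))" .
  moreover have "integral {-(1/b)..1/b} (\<lambda>u. exp (-1::real)) = 2 / (b * exp 1)"
    using b by (simp add: exp_minus field_simps)
  ultimately show ?thesis by simp
qed

lemma integral_of_real_HK:
  fixes f :: "real \<Rightarrow> real"
  assumes "f integrable_on S"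
  shows "integral S (\<lambda>x. complex_of_real (f x)) = complex_of_real (integral S f)"
  using has_integral_of_real[OF integrable_integral[OF assms]] by (rule integral_unique)

lemma smoothing:
  fixes q :: "real \<Rightarrow> real" and L A B R b :: real
  assumes lip: "\<And>x y. \<bar>q x - q y\<bar> \<le> L * \<bar>x - y\<bar>" and L: "0 \<le> L"
    and supp: "\<And>x. x \<notin> {A..B} \<Longrightarrow> q x = 0"
    and AB: "B - A \<le> R" and R1: "1 \<le> R" and b1: "1 \<le> b"
  defines "c \<equiv> integral {-R..R} (\<lambda>u. exp (- (b^2) * u^2))"
  defines "V \<equiv> \<lambda>w. integral {A..B} (\<lambda>\<tau>. of_real (q \<tau>) * gk (b^2) (w - of_real \<tau>)) / of_real c"
  shows "V holomorphic_on UNIV"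
    and "\<And>x. Im (V (of_real x)) = 0"
    and "\<And>x. x \<in> {A..B} \<Longrightarrow> \<bar>Re (V (of_real x)) - q x\<bar> \<le> L * exp 1 / (2*b)"
    and "\<And>w. \<bar>Im w\<bar> \<le> pi \<Longrightarrow> \<bar>Im (V w)\<bar> \<le> L * exp (b^2 * pi^2) * exp 1 / (2*b)"
proof -
  define a where "a = b^2"
  have a: "a > 0" using b1 unfolding a_def by simp
  have qc: "continuous_on S q" for S using lip_cont[OF lip L] .
  have supp': "\<forall>x. x \<notin> {A..B} \<longrightarrow> q x = 0" using supp by blast
  have clow: "2 / (b * exp 1) \<le> c" unfolding c_def using c_lower[OF b1 R1] .
  have bpos: "0 < 2 / (b * exp 1)" using b1 by simp
  have cpos: "c > 0" using clow bpos by linarith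
  have ac: "2 * b / exp 1 \<le> a * c"
  proof -
    have "a * (2 / (b * exp 1)) \<le> a * c" using clow a by (intro mult_left_mono) auto
    moreover have "a * (2 / (b * exp 1)) = 2 * b / exp 1" unfolding a_def using b1 by (simp add: power2_eq_square field_simps)
    ultimately show ?thesis by simp
  qed
  have fin: "E / a / c \<le> E * exp 1 / (2*b)" if "0 \<le> E" for E
  proof -
    have "0 < a * c * (2 * b / exp 1)" using a cpos b1 by simp
    then have "E / (a * c) \<le> E / (2 * b / exp 1)"
      using divide_left_mono[OF ac that] by simp
    then show ?thesis by (simp add: field_simps)
  qed
  show "V holomorphic_on UNIV"
  proof -
    have qs: "continuous_on S (\<lambda>p. complex_of_real (q (snd p)))" for S :: "(complex \<times> real) set"
      by (intro continuous_intros continuous_on_compose2[OF qc continuous_on_snd]) auto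
    have "(\<lambda>w. integral (cbox A B) (\<lambda>\<tau>. of_real (q \<tau>) * gk a (w - of_real \<tau>))) holomorphic_on UNIV"
    proof (rule leibniz_rule_holomorphic[where fx = "\<lambda>w \<tau>. of_real (q \<tau>) * (gk a (w - of_real \<tau>) * (- of_real a * (2 * (w - of_real \<tau>))))"])
      fix w :: complex and \<tau> :: real
      show "((\<lambda>w. of_real (q \<tau>) * gk a (w - of_real \<tau>)) has_field_derivative
             of_real (q \<tau>) * (gk a (w - of_real \<tau>) * (- of_real a * (2 * (w - of_real \<tau>))))) (at w within UNIV)"
        unfolding gk_def by (auto intro!: derivative_eq_intros)
    next
      fix w :: complex
      show "(\<lambda>\<tau>. of_real (q \<tau>) * gk a (w - of_real \<tau>)) integrable_on cbox A B"
        unfolding cbox_interval by (intro integrable_continuous_interval continuous_intros qc)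
    next
      show "continuous_on (UNIV \<times> cbox A B) (\<lambda>(w, \<tau>). of_real (q \<tau>) * (gk a (w - of_real \<tau>) * (- of_real a * (2 * (w - of_real \<tau>)))))"
        unfolding case_prod_unfold by (intro continuous_intros qs)
    qed auto
    then show ?thesis unfolding V_def cbox_interval a_def by (intro holomorphic_intros) (use cpos in auto)
  qed
  show "Im (V (of_real x)) = 0" for x
  proof -
    have e: "of_real (q \<tau>) * gk a (of_real x - of_real \<tau>) = of_real (q \<tau> * exp (- a * (x - \<tau>)^2))" for \<tau>
      by (subst of_real_diff[symmetric], subst gk_real) simp
    have "integral {A..B} (\<lambda>\<tau>. of_real (q \<tau>) * gk a (of_real x - of_real \<tau>))
        = integral {A..B} (\<lambda>\<tau>. of_real (q \<tau> * exp (- a * (x - \<tau>)^2)))"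
      by (simp only: e)
    also have "\<dots> = of_real (integral {A..B} (\<lambda>\<tau>. q \<tau> * exp (- a * (x - \<tau>)^2)))"
      by (intro integral_of_real_HK integrable_continuous_interval continuous_intros qc)
    finally show ?thesis unfolding V_def a_def by (simp add: Im_divide_of_real)
  qed
  show "\<bar>Im (V w)\<bar> \<le> L * exp (b^2 * pi^2) * exp 1 / (2*b)" if w: "\<bar>Im w\<bar> \<le> pi" for w
  proof -
    define x where "x = Re w"
    define R' where "R' = \<bar>x - A\<bar> + \<bar>x - B\<bar>"
    have R': "0 \<le> R'" unfolding R'_def by simp
    have sub: "{A..B} \<subseteq> {Re w - R'..Re w + R'}" unfolding R'_def x_def by auto
    note D = decomp[of q A B w R' a, OF qc supp' sub]
    let ?f1 = "integral {Re w - R'..Re w + R'} (\<lambda>\<tau>. of_real (q \<tau> - q (Re w)) * gk a (w - of_real \<tau>))"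
    have "Im (integral {A..B} (\<lambda>\<tau>. of_real (q \<tau>) * gk a (w - of_real \<tau>))) = Im ?f1"
      unfolding D using Im_int_gk[of R' a "Im w"] by simp
    then have "Im (V w) = Im ?f1 / c" unfolding V_def a_def by (simp add: Im_divide_of_real)
    then have "\<bar>Im (V w)\<bar> \<le> norm ?f1 / c" using cpos abs_Im_le_cmod[of ?f1] by (simp add: divide_right_mono)
    also have "\<dots> \<le> L * exp (a * (Im w)^2) / a / c"
      by (rule divide_right_mono[OF key_bound[OF lip L a R', of w]]) (use cpos in simp)
    also have "\<dots> \<le> L * exp (a * pi^2) / a / c"
    proof -
      have "(Im w)^2 \<le> pi^2" using w by (metis abs_le_square_iff abs_of_nonneg pi_ge_zero power2_abs)
      then have "exp (a * (Im w)^2) \<le> exp (a * pi^2)" using a by simp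
      then show ?thesis using L a cpos by (intro divide_right_mono mult_left_mono) auto
    qed
    also have "\<dots> \<le> L * exp (a * pi^2) * exp 1 / (2*b)" by (rule fin) (use L in simp)
    finally show ?thesis unfolding a_def .
  qed
  show "\<bar>Re (V (of_real x)) - q x\<bar> \<le> L * exp 1 / (2*b)" if x: "x \<in> {A..B}" for x
  proof -
    have sub: "{A..B} \<subseteq> {Re (of_real x) - R..Re (of_real x) + R}" using x AB by auto
    note D = decomp[of q A B "of_real x" R a, OF qc supp' sub]
    let ?f1 = "integral {x - R..x + R} (\<lambda>\<tau>. of_real (q \<tau> - q x) * gk a (of_real x - of_real \<tau>))"
    have I0: "integral {-R..R} (\<lambda>u. gk a (of_real u + \<i> * of_real (Im (of_real x)))) = of_real c"
    proof -
      have "integral {-R..R} (\<lambda>u. gk a (of_real u + \<i> * of_real (Im (of_real x)))) = integral {-R..R} (\<lambda>u. of_real (exp (- a * u^2)))"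
        by (simp add: gk_real)
      also have "\<dots> = of_real c" unfolding c_def a_def
        by (intro integral_of_real_HK integrable_continuous_interval continuous_intros)
      finally show ?thesis .
    qed
    have "V (of_real x) = (?f1 + of_real (q x) * of_real c) / of_real c"
      unfolding V_def a_def[symmetric] D I0 by simp
    also have "\<dots> = ?f1 / of_real c + of_real (q x)" using cpos by (simp add: field_simps)
    finally have "Re (V (of_real x)) - q x = Re ?f1 / c" by (simp add: Re_divide_of_real)
    then have "\<bar>Re (V (of_real x)) - q x\<bar> \<le> norm ?f1 / c" using cpos abs_Re_le_cmod[of ?f1] by (simp add: divide_right_mono)
    also have "\<dots> \<le> L / a / c"
    proof -
      have kb: "norm (integral {Re (of_real x) - R..Re (of_real x) + R} (\<lambda>\<tau>. of_real (q \<tau> - q (Re (of_real x))) * gk a (of_real x - of_real \<tau>))) \<le> L * exp (a * (Im (of_real x))^2) / a"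
        by (rule key_bound[OF lip L a]) (use R1 in simp)
      then have "norm ?f1 \<le> L / a" by simp
      from divide_right_mono[OF this, of c] cpos show ?thesis by simp
    qed
    also have "\<dots> \<le> L * exp 1 / (2*b)" using fin[OF L] by simp
    finally show ?thesis .
  qed
qed

lemma aux1: fixes E :: real assumes "E + 1 \<noteq> 0" shows "2 * E / (E + 1)^2 = (1 - ((E - 1) / (E + 1))^2) / 2"
proof -
  have e1: "((E - 1) / (E + 1))^2 = (E - 1)^2 / (E + 1)^2" by (rule power_divide)
  have "((E + 1)^2 - (E - 1)^2) / (E + 1)^2 = 1 - (E - 1)^2 / (E + 1)^2"
    using assms by (simp add: diff_divide_distrib)
  then have "((E + 1)^2 - (E - 1)^2) / (E + 1)^2 = (1 - ((E - 1) / (E + 1))^2)"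
    unfolding e1 .
  also have "(E + 1)^2 - (E - 1)^2 = 4 * E" by (simp add: power2_eq_square algebra_simps)
  finally show ?thesis by simp
qed
lemma aux2: fixes z \<zeta> :: complex assumes ne: "exp z + 1 \<noteq> 0"
  shows "((\<lambda>z. (exp z - 1) / (exp z + 1) * \<zeta>) has_field_derivative (2 * exp z / (exp z + 1)^2 * \<zeta>)) (at z within S)"
proof -
  have "((\<lambda>z. (exp z - 1) / (exp z + 1) * \<zeta>) has_field_derivative ((exp z * (exp z + 1) - (exp z - 1) * exp z) / (exp z + 1)^2 * \<zeta>)) (at z within S)"
    using ne by (auto intro!: derivative_eq_intros simp: power2_eq_square algebra_simps)
  moreover have "(exp z * (exp z + 1) - (exp z - 1) * exp z) = 2 * exp z" by (simp add: algebra_simps)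
  ultimately show ?thesis by simp
qed

definition rho :: "real \<Rightarrow> real" where "rho s = (exp s - 1) / (exp s + 1)"

lemma rho_abs: "\<bar>rho s\<bar> < 1"
proof -
  have p: "exp s + 1 > 0" using exp_gt_zero[of s] by linarith
  have l: "\<bar>exp s - 1\<bar> < exp s + 1" using exp_gt_zero[of s] by linarith
  have "\<bar>rho s\<bar> = \<bar>exp s - 1\<bar> / (exp s + 1)" unfolding rho_def using p by (simp add: abs_divide)
  also have "\<dots> < 1" using l p by (simp add: divide_less_eq)
  finally show ?thesis .
qed

lemma rho_0[simp]: "rho 0 = 0" unfolding rho_def by simp

lemma rho_cplx: "(exp (complex_of_real s) - 1) / (exp (complex_of_real s) + 1) = complex_of_real (rho s)"
  unfolding rho_def exp_of_real by simp

lemma rho_deriv_eq: "2 * exp s / (exp s + 1)^2 = (1 - (rho s)^2) / 2"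
proof -
  have p: "exp s + 1 \<noteq> 0" using exp_gt_zero[of s] by linarith
  show ?thesis unfolding rho_def by (rule aux1[OF p])
qed

lemma rho_ln: assumes "0 \<le> r" "r < 1" shows "rho (ln ((1 + r) / (1 - r))) = r"
proof -
  define Q where "Q = (1 + r) / (1 - r)"
  have Q0: "Q > 0" unfolding Q_def using assms by simp
  have n: "1 - r \<noteq> 0" using assms by simp
  have a: "Q - 1 = 2 * r / (1 - r)" unfolding Q_def using n by (simp add: field_simps)
  have b: "Q + 1 = 2 / (1 - r)" unfolding Q_def using n by (simp add: field_simps)
  have "rho (ln Q) = (Q - 1) / (Q + 1)" unfolding rho_def using Q0 by simp
  also have "\<dots> = r" unfolding a b using n by simp
  finally show ?thesis unfolding Q_def .
qed

lemma ray_lip: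
  assumes hol: "h holomorphic_on unit_disc"
    and bl: "\<forall>z\<in>unit_disc. (1 - (norm z)^2) * norm (deriv h z) \<le> Bc"
    and zeta: "norm \<zeta> = 1"
  shows "norm (h (of_real (rho x) * \<zeta>) - h (of_real (rho y) * \<zeta>)) \<le> Bc / 2 * \<bar>x - y\<bar>"
proof -
  let ?g = "\<lambda>z::complex. (exp z - 1) / (exp z + 1) * \<zeta>"
  let ?H = "\<lambda>z::complex. h (?g z)"
  have mem: "of_real (rho s) * \<zeta> \<in> unit_disc" for s
    using rho_abs[of s] zeta by (simp add: norm_mult)
  have der: "(?H has_field_derivative deriv h (?g z) * (2 * exp z / (exp z + 1)^2 * \<zeta>)) (at z within \<real>)"
    if z: "z \<in> \<real>" for z
  proof -
    obtain s where s: "z = of_real s" using z Reals_cases by blast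
    have gz: "?g z = of_real (rho s) * \<zeta>" unfolding s rho_cplx ..
    have ne: "exp z + 1 \<noteq> 0"
    proof
      assume "exp z + 1 = 0"
      then have "Re (exp z + 1) = 0" by simp
      moreover have "Re (exp z + 1) = exp s + 1" unfolding s exp_of_real by simp
      ultimately show False using exp_gt_zero[of s] by linarith
    qed
    have hd: "(h has_field_derivative deriv h (?g z)) (at (?g z))"
      using holomorphic_derivI[OF hol open_ball] mem gz by simp
    have gd: "(?g has_field_derivative (2 * exp z / (exp z + 1)^2 * \<zeta>)) (at z within \<real>)"
      by (rule aux2[OF ne])
    show ?thesis using DERIV_chain'[OF gd hd] by (simp add: mult_ac)
  qed
  have dn: "norm (deriv h (?g z) * (2 * exp z / (exp z + 1)^2 * \<zeta>)) \<le> Bc / 2" if z: "z \<in> \<real>" for z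
  proof -
    obtain s where s: "z = of_real s" using z Reals_cases by blast
    have gz: "?g z = of_real (rho s) * \<zeta>" unfolding s rho_cplx ..
    have e: "2 * exp z / (exp z + 1)^2 = of_real (2 * exp s / (exp s + 1)^2)"
      unfolding s exp_of_real by simp
    have n2: "norm (2 * exp z / (exp z + 1)^2 * \<zeta>) = (1 - (rho s)^2) / 2"
    proof -
      have "norm (2 * exp z / (exp z + 1)^2 * \<zeta>) = \<bar>2 * exp s / (exp s + 1)^2\<bar>"
        unfolding e norm_mult zeta norm_of_real by simp
      also have "\<dots> = 2 * exp s / (exp s + 1)^2" by simp
      also have "\<dots> = (1 - (rho s)^2) / 2" by (rule rho_deriv_eq)
      finally show ?thesis .
    qed
    have "norm (deriv h (?g z) * (2 * exp z / (exp z + 1)^2 * \<zeta>)) = norm (deriv h (?g z)) * ((1 - (rho s)^2) / 2)"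
      by (subst norm_mult, subst n2, rule refl)
    also have "\<dots> = ((1 - (norm (of_real (rho s) * \<zeta>))^2) * norm (deriv h (of_real (rho s) * \<zeta>))) / 2"
      unfolding gz by (simp add: norm_mult zeta)
    also have "\<dots> \<le> Bc / 2" using bl mem[of s] by (simp add: divide_right_mono)
    finally show ?thesis .
  qed
  have "norm (?H (of_real x) - ?H (of_real y)) \<le> Bc / 2 * norm (of_real x - of_real y :: complex)"
    by (rule field_differentiable_bound[OF convex_Reals der dn]) auto
  moreover have "?H (of_real s) = h (of_real (rho s) * \<zeta>)" for s by (simp only: rho_cplx)
  moreover have "norm (of_real x - of_real y :: complex) = \<bar>x - y\<bar>" by (metis norm_of_real of_real_diff)
  ultimately show ?thesis by simp
qed

definition trunc :: "(real \<Rightarrow> real) \<Rightarrow> real \<Rightarrow> real \<Rightarrow> real" where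
  "trunc p T s = p (max (min s T) 0) + p T * max 0 (1 - (max s T - T) / max 1 \<bar>p T\<bar>) - p T"

lemma clamp_lip: "\<bar>max (min x T) 0 - max (min y T) 0\<bar> \<le> \<bar>x - y :: real\<bar>"
  by (simp add: max_def min_def)

lemma max0_lip: "\<bar>max 0 u - max 0 v\<bar> \<le> \<bar>u - v :: real\<bar>"
  by (simp add: max_def)

lemma maxT_lip: "\<bar>max x T - max y T\<bar> \<le> \<bar>x - y :: real\<bar>"
  by (cases "x \<le> T"; cases "y \<le> T") auto

lemma ramp_lip:
  fixes P D x y T :: real
  assumes D1: "1 \<le> D" and DP: "\<bar>P\<bar> \<le> D"
  shows "\<bar>P * max 0 (1 - (max x T - T) / D) - P * max 0 (1 - (max y T - T) / D)\<bar> \<le> \<bar>x - y\<bar>"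
proof -
  let ?u = "1 - (max x T - T) / D" and ?v = "1 - (max y T - T) / D"
  have "\<bar>P * max 0 ?u - P * max 0 ?v\<bar> = \<bar>P\<bar> * \<bar>max 0 ?u - max 0 ?v\<bar>"
    by (simp only: right_diff_distrib[symmetric] abs_mult)
  also have "\<dots> \<le> \<bar>P\<bar> * \<bar>?u - ?v\<bar>"
    by (intro mult_left_mono max0_lip) auto
  also have "?u - ?v = (max y T - max x T) / D" by (simp add: diff_divide_distrib)
  also have "\<bar>(max y T - max x T) / D\<bar> = \<bar>max x T - max y T\<bar> / D"
    using D1 by (simp add: abs_divide abs_minus_commute)
  also have "\<bar>P\<bar> * (\<bar>max x T - max y T\<bar> / D) \<le> \<bar>P\<bar> * (\<bar>x - y\<bar> / D)"
    using D1 maxT_lip[of x T y] by (intro mult_left_mono divide_right_mono) auto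
  also have "\<bar>P\<bar> * (\<bar>x - y\<bar> / D) = (\<bar>P\<bar> / D) * \<bar>x - y\<bar>" by simp
  also have "\<dots> \<le> 1 * \<bar>x - y\<bar>" using D1 DP by (intro mult_right_mono) auto
  finally show ?thesis by simp
qed

lemma trunc_lip:
  assumes lip: "\<And>x y. \<bar>p x - p y\<bar> \<le> L0 * \<bar>x - y\<bar>" and L0: "0 \<le> L0"
  shows "\<bar>trunc p T x - trunc p T y\<bar> \<le> (L0 + 1) * \<bar>x - y\<bar>"
proof -
  define D where "D = max 1 \<bar>p T\<bar>"
  have D1: "1 \<le> D" unfolding D_def by simp
  have DpT: "\<bar>p T\<bar> \<le> D" unfolding D_def by simp
  let ?a = "p (max (min x T) 0) - p (max (min y T) 0)"
  let ?b = "p T * max 0 (1 - (max x T - T) / D) - p T * max 0 (1 - (max y T - T) / D)"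
  have A: "\<bar>?a\<bar> \<le> L0 * \<bar>x - y\<bar>"
    using lip[of "max (min x T) 0" "max (min y T) 0"] clamp_lip[of x T y] L0
    by (meson mult_left_mono order_trans)
  have B: "\<bar>?b\<bar> \<le> \<bar>x - y\<bar>" by (rule ramp_lip[OF D1 DpT])
  have "trunc p T x - trunc p T y = ?a + ?b" unfolding trunc_def D_def[symmetric] by simp
  then have "\<bar>trunc p T x - trunc p T y\<bar> \<le> \<bar>?a\<bar> + \<bar>?b\<bar>" by (simp only: abs_triangle_ineq)
  then show ?thesis using A B by (simp add: distrib_right)
qed

lemma trunc_supp:
  assumes p0: "p 0 = 0" and T: "0 \<le> T" and s: "s \<notin> {0..T + max 1 \<bar>p T\<bar>}"
  shows "trunc p T s = 0"
proof (cases "s < 0")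
  case True
  then show ?thesis unfolding trunc_def using T p0 by (simp add: max_def min_def)
next
  case False
  define D where "D = max 1 \<bar>p T\<bar>"
  have D1: "1 \<le> D" unfolding D_def by simp
  have sT: "s > T + D" using s False unfolding D_def by auto
  then have "(max s T - T) / D > 1" using D1 T by (simp add: max_def field_simps)
  then have "max 0 (1 - (max s T - T) / D) = 0" by simp
  moreover have "max (min s T) 0 = T" using sT T D1 by (simp add: max_def min_def)
  ultimately show ?thesis unfolding trunc_def D_def[symmetric] by simp
qed

lemma trunc_eq:
  assumes "0 \<le> s" "s \<le> T"
  shows "trunc p T s = p s"
  unfolding trunc_def using assms by (simp add: max_def min_def)

lemma smoothing_ex:
  fixes q :: "real \<Rightarrow> real" and L A B R b :: real
  assumes lip: "\<And>x y. \<bar>q x - q y\<bar> \<le> L * \<bar>x - y\<bar>" and L: "0 \<le> L"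
    and supp: "\<And>x. x \<notin> {A..B} \<Longrightarrow> q x = 0"
    and AB: "B - A \<le> R" and R1: "1 \<le> R" and b1: "1 \<le> b"
  shows "\<exists>V. V holomorphic_on UNIV \<and> (\<forall>x. Im (V (of_real x)) = 0)
     \<and> (\<forall>x\<in>{A..B}. \<bar>Re (V (of_real x)) - q x\<bar> \<le> L * exp 1 / (2*b))
     \<and> (\<forall>w. \<bar>Im w\<bar> \<le> pi \<longrightarrow> \<bar>Im (V w)\<bar> \<le> L * exp (b^2 * pi^2) * exp 1 / (2*b))"
proof -
  note S = smoothing[of q L A B R b, OF lip L supp AB R1 b1]
  define V0 where "V0 = (\<lambda>w. integral {A..B} (\<lambda>\<tau>. of_real (q \<tau>) * gk (b^2) (w - of_real \<tau>)) / of_real (integral {-R..R} (\<lambda>u. exp (- (b^2) * u^2))))"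
  have 1: "V0 holomorphic_on UNIV" unfolding V0_def by (rule S(1))
  have 2: "\<forall>x. Im (V0 (of_real x)) = 0" unfolding V0_def using S(2) by simp
  have 3: "\<forall>x\<in>{A..B}. \<bar>Re (V0 (of_real x)) - q x\<bar> \<le> L * exp 1 / (2*b)" unfolding V0_def using S(3) by simp
  have 4: "\<forall>w. \<bar>Im w\<bar> \<le> pi \<longrightarrow> \<bar>Im (V0 w)\<bar> \<le> L * exp (b^2 * pi^2) * exp 1 / (2*b)" unfolding V0_def using S(4) by simp
  show ?thesis using 1 2 3 4 by blast
qed

lemma re_mobius_pos:
  fixes w :: complex assumes w: "norm w < 1"
  shows "Re ((1 + w) / (1 - w)) > 0"
proof -
  have n: "(Re w)^2 + (Im w)^2 < 1"
  proof -
    have "(norm w)^2 < 1" using w norm_ge_zero[of w] by (simp add: power_less_one_iff abs_square_less_1)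
    then show ?thesis by (simp add: cmod_power2)
  qed
  have rw: "Re w < 1" using w abs_Re_le_cmod[of w] by linarith
  have "Re ((1 + w) / (1 - w)) = (1 - ((Re w)^2 + (Im w)^2)) / ((1 - Re w)^2 + (Im w)^2)"
    by (simp add: Re_divide power2_eq_square algebra_simps)
  moreover have "(1 - Re w)^2 + (Im w)^2 > 0" using rw by (simp add: add_pos_nonneg)
  ultimately show ?thesis using n by simp
qed

lemma cos_half: "\<bar>d\<bar> \<le> 1 \<Longrightarrow> 1/2 \<le> cos (d::real)"
proof -
  assume d: "\<bar>d\<bar> \<le> 1"
  have "\<bar>d\<bar> \<le> pi / 3" using d pi_gt3 by linarith
  then have "cos (pi/3) \<le> cos \<bar>d\<bar>" by (intro cos_monotone_0_pi_le) auto
  then show ?thesis by (simp add: cos_60)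
qed

definition Mc :: "real \<Rightarrow> real" where
  "Mc Bc = (Bc/2 + 1) * exp ((2*(Bc/2 + 1) + 1)^2 * pi^2) * exp 1 / (2*(2*(Bc/2 + 1) + 1))"

lemma test_function:
  fixes h :: "complex \<Rightarrow> complex" and Bc t \<theta> :: real
  assumes hol: "h holomorphic_on unit_disc"
    and bl: "\<forall>z\<in>unit_disc. (1 - (norm z)^2) * norm (deriv h z) \<le> Bc" and Bc: "0 \<le> Bc"
    and t0: "0 \<le> t" and t1: "t < 1"
  obtains \<phi> where "\<phi> holomorphic_on unit_disc"
    and "\<And>z. z \<in> unit_disc \<Longrightarrow> norm (\<phi> z) \<le> exp (Mc Bc)"
    and "\<And>r. r \<in> {0..t} \<Longrightarrow> exp (Re (h (of_real r * exp (\<i> * of_real \<theta>)))) / 2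
            \<le> Re (\<phi> (of_real r * exp (\<i> * of_real \<theta>)) * exp (h (of_real r * exp (\<i> * of_real \<theta>))))"
proof -
  define \<zeta> where "\<zeta> = exp (\<i> * of_real \<theta>)"
  have nz: "norm \<zeta> = 1" unfolding \<zeta>_def by simp
  have cz: "cnj \<zeta> * \<zeta> = 1"
  proof -
    have "\<zeta> * cnj \<zeta> = of_real ((norm \<zeta>)^2)" by (rule complex_norm_square[symmetric])
    then show ?thesis using nz by (simp add: mult.commute)
  qed
  define L0 where "L0 = Bc / 2"
  define L where "L = L0 + 1"
  define b where "b = 2 * L + 1"
  have L0: "0 \<le> L0" unfolding L0_def using Bc by simp
  have L: "0 \<le> L" unfolding L_def using L0 by simp
  have b1: "1 \<le> b" unfolding b_def using L by simp
  define p where "p s = Im (h (of_real (rho s) * \<zeta>)) - Im (h 0)" for s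
  have plip: "\<bar>p x - p y\<bar> \<le> L0 * \<bar>x - y\<bar>" for x y
  proof -
    have "\<bar>p x - p y\<bar> = \<bar>Im (h (of_real (rho x) * \<zeta>) - h (of_real (rho y) * \<zeta>))\<bar>"
      unfolding p_def by simp
    also have "\<dots> \<le> norm (h (of_real (rho x) * \<zeta>) - h (of_real (rho y) * \<zeta>))" by (rule abs_Im_le_cmod)
    also have "\<dots> \<le> Bc / 2 * \<bar>x - y\<bar>" by (rule ray_lip[OF hol bl nz])
    finally show ?thesis unfolding L0_def .
  qed
  have p0: "p 0 = 0" unfolding p_def by simp
  define T where "T = ln ((1 + t) / (1 - t))"
  have T0: "0 \<le> T" unfolding T_def using t0 t1 by simp
  define D where "D = max 1 \<bar>p T\<bar>"
  have D1: "1 \<le> D" unfolding D_def by simp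
  define q where "q = trunc p T"
  have qlip: "\<bar>q x - q y\<bar> \<le> L * \<bar>x - y\<bar>" for x y
    unfolding q_def L_def by (rule trunc_lip[OF plip L0])
  have qsupp: "q x = 0" if "x \<notin> {0..T + D}" for x
    unfolding q_def by (rule trunc_supp[of p T x, OF p0 T0]) (use that in \<open>simp add: D_def\<close>)
  obtain V where Vhol: "V holomorphic_on UNIV"
      and Vreal: "\<forall>x. Im (V (of_real x)) = 0"
      and Vapp: "\<forall>x\<in>{0..T + D}. \<bar>Re (V (of_real x)) - q x\<bar> \<le> L * exp 1 / (2*b)"
      and Vim: "\<forall>w. \<bar>Im w\<bar> \<le> pi \<longrightarrow> \<bar>Im (V w)\<bar> \<le> L * exp (b^2 * pi^2) * exp 1 / (2*b)"
    using smoothing_ex[of q L 0 "T + D" "T + D" b, OF qlip L qsupp _ _ b1] T0 D1 by auto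
  have MV: "L * exp (b^2 * pi^2) * exp 1 / (2*b) = Mc Bc"
    unfolding Mc_def b_def L_def L0_def by simp
  have app1: "L * exp 1 / (2*b) \<le> 1"
  proof -
    have "L * exp 1 \<le> L * 3" using L exp_le by (intro mult_left_mono) auto
    also have "\<dots> \<le> 2 * b" unfolding b_def using L by simp
    finally show ?thesis using b1 by simp
  qed
  define Mob where "Mob z = (1 + cnj \<zeta> * z) / (1 - cnj \<zeta> * z)" for z
  define \<phi> where "\<phi> z = exp (- \<i> * (V (Ln (Mob z)) + of_real (Im (h 0))))" for z
  have wD: "norm (cnj \<zeta> * z) < 1" if "z \<in> unit_disc" for z
    using that nz by (simp add: norm_mult)
  have ne1: "1 - cnj \<zeta> * z \<noteq> 0" if "z \<in> unit_disc" for z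
  proof
    assume "1 - cnj \<zeta> * z = 0"
    then have "cnj \<zeta> * z = 1" by simp
    then show False using wD[OF that] by simp
  qed
  have Mpos: "Re (Mob z) > 0" if "z \<in> unit_disc" for z
    unfolding Mob_def by (rule re_mobius_pos[OF wD[OF that]])
  have Mhol: "Mob holomorphic_on unit_disc"
    unfolding Mob_def[abs_def] by (intro holomorphic_intros) (use ne1 in auto)
  have Lhol: "(\<lambda>z. Ln (Mob z)) holomorphic_on unit_disc"
  proof (rule holomorphic_on_Ln'[OF _ Mhol])
    fix z assume "z \<in> unit_disc"
    then have "Re (Mob z) > 0" by (rule Mpos)
    then show "Mob z \<notin> \<real>\<^sub>\<le>\<^sub>0" by (auto simp: complex_nonpos_Reals_iff)
  qed
  have VLhol: "(V \<circ> (\<lambda>z. Ln (Mob z))) holomorphic_on unit_disc"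
    by (rule holomorphic_on_compose[OF Lhol holomorphic_on_subset[OF Vhol]]) auto
  have phol: "\<phi> holomorphic_on unit_disc"
  proof -
    have "(\<lambda>z. exp (- \<i> * ((V \<circ> (\<lambda>z. Ln (Mob z))) z + of_real (Im (h 0))))) holomorphic_on unit_disc"
      by (intro holomorphic_intros VLhol)
    then show ?thesis unfolding \<phi>_def[abs_def] by (simp add: o_def)
  qed
  have pbound: "norm (\<phi> z) \<le> exp (Mc Bc)" if z: "z \<in> unit_disc" for z
  proof -
    have M0: "Mob z \<noteq> 0" using Mpos[OF z] by auto
    have "\<bar>Im (Ln (Mob z))\<bar> \<le> pi"
      using mpi_less_Im_Ln[OF M0] Im_Ln_le_pi[OF M0] by linarith
    then have "\<bar>Im (V (Ln (Mob z)))\<bar> \<le> Mc Bc" using Vim MV by auto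
    moreover have "norm (\<phi> z) = exp (Im (V (Ln (Mob z))))" unfolding \<phi>_def by simp
    ultimately show ?thesis by simp
  qed
  have ray: "exp (Re (h (of_real r * \<zeta>))) / 2 \<le> Re (\<phi> (of_real r * \<zeta>) * exp (h (of_real r * \<zeta>)))"
    if r: "r \<in> {0..t}" for r
  proof -
    have r0: "0 \<le> r" and r1: "r < 1" and rt: "r \<le> t" using r t1 by auto
    define s where "s = ln ((1 + r) / (1 - r))"
    have Qpos: "(1 + r) / (1 - r) > 0" using r0 r1 by simp
    have Mr: "Mob (of_real r * \<zeta>) = of_real ((1 + r) / (1 - r))"
    proof -
      have e: "cnj \<zeta> * (of_real r * \<zeta>) = of_real r" using cz by (simp add: mult.left_commute)
      show ?thesis unfolding Mob_def e by simp
    qed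
    have Ls: "Ln (Mob (of_real r * \<zeta>)) = of_real s" unfolding Mr s_def by (rule Ln_of_real[OF Qpos])
    have s0: "0 \<le> s" unfolding s_def using r0 r1 by simp
    have sT: "s \<le> T"
    proof -
      have "(1 + r) / (1 - r) \<le> (1 + t) / (1 - t)"
        using r0 r1 rt t1 by (intro frac_le) auto
      then show ?thesis unfolding s_def T_def using Qpos by simp
    qed
    have qs: "q s = p s" unfolding q_def by (rule trunc_eq[OF s0 sT])
    have ps: "p s = Im (h (of_real r * \<zeta>)) - Im (h 0)" unfolding p_def s_def rho_ln[OF r0 r1] ..
    have dif: "\<bar>Re (V (of_real s)) - p s\<bar> \<le> 1" using Vapp s0 sT D1 app1 qs by force
    have Vs: "V (of_real s) = of_real (Re (V (of_real s)))" using Vreal by (simp add: complex_eq_iff)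
    let ?z = "of_real r * \<zeta>"
    have "\<phi> ?z * exp (h ?z) = exp (h ?z - \<i> * (V (of_real s) + of_real (Im (h 0))))"
      unfolding \<phi>_def Ls by (simp add: exp_add[symmetric] algebra_simps)
    then have "Re (\<phi> ?z * exp (h ?z)) = exp (Re (h ?z)) * cos (Im (h ?z) - Re (V (of_real s)) - Im (h 0))"
      by (simp add: Re_exp Vreal diff_diff_eq)
    also have "Im (h ?z) - Re (V (of_real s)) - Im (h 0) = p s - Re (V (of_real s))" using ps by simp
    finally have e: "Re (\<phi> ?z * exp (h ?z)) = exp (Re (h ?z)) * cos (p s - Re (V (of_real s)))" .
    have "1/2 \<le> cos (p s - Re (V (of_real s)))" using dif by (intro cos_half) (simp add: abs_minus_commute)
    then have "exp (Re (h ?z)) * (1/2) \<le> exp (Re (h ?z)) * cos (p s - Re (V (of_real s)))"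
      by (intro mult_left_mono) auto
    then show ?thesis unfolding e by simp
  qed
  show ?thesis
    by (rule that[OF phol pbound]) (use ray in \<open>simp_all add: \<zeta>_def\<close>)
qed

lemma subst01:
  fixes k :: "real \<Rightarrow> real" assumes t: "0 < t"
  shows "integral {0..1} (\<lambda>u. t * k (t * u)) = integral {0..t} k"
proof -
  have "integral ((\<lambda>x. x / t) ` {0..t}) (\<lambda>x. k (t * x)) = (1 / \<bar>t\<bar>) *\<^sub>R integral {0..t} k"
    by (rule integral_stretch_real) (use t in simp)
  moreover have "(\<lambda>x. x / t) ` {0..t} = {0..1}" using t by simp
  ultimately have "integral {0..1} (\<lambda>x. k (t * x)) = (1 / t) * integral {0..t} k" using t by simp
  moreover have "integral {0..1} (\<lambda>u. t * k (t * u)) = t * integral {0..1} (\<lambda>x. k (t * x))"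
    using integral_cmul[of "{0..1}" t "\<lambda>u. k (t * u)"] by simp
  ultimately show ?thesis using t by simp
qed

lemma line_int: "contour_integral (linepath 0 z) k = integral {0..1} (\<lambda>u. k (of_real u * z) * z)"
  by (simp add: contour_integral_integral linepath_def scaleR_conv_of_real)

lemma seg_in_disc: "z \<in> unit_disc \<Longrightarrow> u \<in> {0..1} \<Longrightarrow> of_real u * z \<in> unit_disc"
proof -
  assume z: "z \<in> unit_disc" and u: "u \<in> {0..1}"
  have "norm (of_real u * z) = u * norm z" using u by (simp add: norm_mult)
  also have "\<dots> \<le> norm z" using u by (simp add: mult_left_le_one_le)
  finally show ?thesis using z by simp
qed

lemma disc_primitive:
  assumes k: "k holomorphic_on unit_disc"
  obtains G where "\<And>z. z \<in> unit_disc \<Longrightarrow> (G has_field_derivative k z) (at z)"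
    and "\<And>z. z \<in> unit_disc \<Longrightarrow> contour_integral (linepath 0 z) k = G z - G 0"
proof -
  obtain G where G: "\<And>x. x \<in> unit_disc \<Longrightarrow> (G has_field_derivative k x) (at x within unit_disc)"
    using holomorphic_convex_primitive'[OF convex_ball open_ball k] by blast
  have G': "(G has_field_derivative k x) (at x)" if "x \<in> unit_disc" for x
  proof -
    have "at x within unit_disc = at x" by (rule at_within_open[OF that open_ball])
    then show ?thesis using G[OF that] by (simp only:)
  qed
  have eq: "contour_integral (linepath 0 z) k = G z - G 0" if z: "z \<in> unit_disc" for z
  proof -
    have sub: "path_image (linepath 0 z) \<subseteq> unit_disc"
      unfolding path_image_linepath by (rule closed_segment_subset) (use z in auto)
    have "(k has_contour_integral (G (pathfinish (linepath 0 z)) - G (pathstart (linepath 0 z)))) (linepath 0 z)"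
      by (rule contour_integral_primitive[OF G valid_path_linepath sub])
    then have "(k has_contour_integral (G z - G 0)) (linepath 0 z)" by simp
    then show ?thesis by (rule contour_integral_unique)
  qed
  show ?thesis by (rule that) (rule G', assumption, rule eq, assumption)
qed

lemma weight_facts:
  assumes "is_weight \<mu>"
  shows "continuous_on unit_disc \<mu>" "\<And>z. z \<in> unit_disc \<Longrightarrow> 0 \<le> \<mu> z"
    "\<And>z. z \<in> unit_disc \<Longrightarrow> \<mu> z = \<mu> (complex_of_real (norm z))"
proof -
  show "continuous_on unit_disc \<mu>" using assms unfolding is_weight_def by (elim conjE)
  show "\<And>z. z \<in> unit_disc \<Longrightarrow> 0 \<le> \<mu> z" using assms unfolding is_weight_def by (elim conjE) blast
  show "\<And>z. z \<in> unit_disc \<Longrightarrow> \<mu> z = \<mu> (complex_of_real (norm z))" using assms unfolding is_weight_def by (elim conjE) blast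
qed

lemma analytic_weight_ex:
  assumes "analytic_weight \<nu>"
  shows "\<exists>F. F holomorphic_on unit_disc \<and> (\<forall>z\<in>unit_disc. 0 < \<nu> z) \<and>
    (\<forall>z\<in>unit_disc. F (complex_of_real (norm z)) = complex_of_real (1 / \<nu> z)) \<and>
    (\<forall>z\<in>unit_disc. norm (F z) \<le> 1 / \<nu> z)"
proof -
  obtain F where Fh: "F holomorphic_on unit_disc"
    and F1: "\<forall>z\<in>unit_disc. complex_of_real (\<nu> z) * F (complex_of_real (norm z)) = 1"
    and F2: "\<forall>z\<in>unit_disc. norm (F z) \<le> Re (F (complex_of_real (norm z)))"
    using assms unfolding analytic_weight_def by blast
  have nn: "0 \<le> \<nu> z" if "z \<in> unit_disc" for z
  proof -
    have "is_weight \<nu>" using assms unfolding analytic_weight_def by blast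
    then show ?thesis using weight_facts(2) that by blast
  qed
  have pos: "0 < \<nu> z" if z: "z \<in> unit_disc" for z
  proof -
    have "\<nu> z \<noteq> 0"
    proof
      assume "\<nu> z = 0"
      moreover have "complex_of_real (\<nu> z) * F (complex_of_real (norm z)) = 1" using F1 z by blast
      ultimately show False by simp
    qed
    then show ?thesis using nn[OF z] by simp
  qed
  have Feq: "F (complex_of_real (norm z)) = complex_of_real (1 / \<nu> z)" if z: "z \<in> unit_disc" for z
  proof -
    have "complex_of_real (\<nu> z) * F (complex_of_real (norm z)) = 1" using F1 z by blast
    moreover have "complex_of_real (\<nu> z) \<noteq> 0" using pos[OF z] by simp
    ultimately show ?thesis by (simp add: eq_divide_eq mult.commute)
  qed
  have Fb: "norm (F z) \<le> 1 / \<nu> z" if z: "z \<in> unit_disc" for z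
  proof -
    have "norm (F z) \<le> Re (F (complex_of_real (norm z)))" using F2 z by blast
    then show ?thesis unfolding Feq[OF z] by simp
  qed
  show ?thesis using Fh pos Feq Fb by blast
qed

lemma nu_pos: "analytic_weight \<nu> \<Longrightarrow> z \<in> unit_disc \<Longrightarrow> 0 < \<nu> z"
  using analytic_weight_ex by blast

lemma Bnorm_facts:
  assumes f: "f \<in> B_inf_w \<nu>" and nu: "analytic_weight \<nu>"
  shows "bdd_above ((\<lambda>z. \<nu> z * norm (deriv f z)) ` unit_disc)"
    and "\<And>w. w \<in> unit_disc \<Longrightarrow> \<nu> w * norm (deriv f w) \<le> (SUP z\<in>unit_disc. \<nu> z * norm (deriv f z))"
    and "0 \<le> (SUP z\<in>unit_disc. \<nu> z * norm (deriv f z))"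
    and "(SUP z\<in>unit_disc. \<nu> z * norm (deriv f z)) \<le> B_inf_norm \<nu> f"
proof -
  have Fp: "\<And>z. z \<in> unit_disc \<Longrightarrow> 0 < \<nu> z" by (rule nu_pos[OF nu])
  obtain K where K: "\<forall>z\<in>unit_disc. \<nu> z * norm (deriv f z) \<le> K"
    using f unfolding B_inf_w_def by blast
  show bdd: "bdd_above ((\<lambda>z. \<nu> z * norm (deriv f z)) ` unit_disc)"
    using K by (intro bdd_aboveI2[of _ _ K]) blast
  show up: "\<nu> w * norm (deriv f w) \<le> (SUP z\<in>unit_disc. \<nu> z * norm (deriv f z))" if "w \<in> unit_disc" for w
    by (rule cSUP_upper[OF that bdd])
  have "0 \<le> \<nu> 0 * norm (deriv f 0)" using Fp[of 0] by simp
  also have "\<dots> \<le> (SUP z\<in>unit_disc. \<nu> z * norm (deriv f z))" by (rule up) simp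
  finally show "0 \<le> (SUP z\<in>unit_disc. \<nu> z * norm (deriv f z))" .
  show "(SUP z\<in>unit_disc. \<nu> z * norm (deriv f z)) \<le> B_inf_norm \<nu> f"
    unfolding B_inf_norm_def by simp
qed

lemma sufficiency:
  fixes g :: "complex \<Rightarrow> complex" and \<nu> \<mu> :: "complex \<Rightarrow> real"
  assumes g: "g holomorphic_on unit_disc" and nu: "analytic_weight \<nu>" and mu: "is_weight \<mu>"
    and C: "\<forall>t\<in>{0..<1}. \<forall>\<theta>\<in>{0..<2*pi}. \<mu> (complex_of_real t) *
         integral {0..t} (\<lambda>r. norm (g (complex_of_real r * exp (\<i> * complex_of_real \<theta>))) / \<nu> (complex_of_real r)) \<le> C"
  shows "S_bounded g \<nu> \<mu>"
proof -
  have npos: "\<And>z. z \<in> unit_disc \<Longrightarrow> 0 < \<nu> z" by (rule nu_pos[OF nu])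
  have nuw: "is_weight \<nu>" using nu unfolding analytic_weight_def by blast
  note nuc = weight_facts(1)[OF nuw] and nurad = weight_facts(3)[OF nuw]
  note mupos = weight_facts(2)[OF mu] and murad = weight_facts(3)[OF mu]
  have C0: "0 \<le> C"
  proof -
    have t0: "(0::real) \<in> {0..<1}" by simp
    have th0: "(0::real) \<in> {0..<2*pi}" using pi_gt_zero by simp
    have "\<mu> (complex_of_real 0) * integral {0..0} (\<lambda>r. norm (g (complex_of_real r * exp (\<i> * complex_of_real 0))) / \<nu> (complex_of_real r)) \<le> C"
      using C t0 th0 by blast
    then show ?thesis by simp
  qed
  have main: "S_op g f \<in> H_inf_w \<mu> \<and> (\<forall>z\<in>unit_disc. \<mu> z * norm (S_op g f z) \<le> C * B_inf_norm \<nu> f)"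
    if f: "f \<in> B_inf_w \<nu>" for f
  proof -
    have fh: "f holomorphic_on unit_disc" using f unfolding B_inf_w_def by blast
    define N where "N = (SUP z\<in>unit_disc. \<nu> z * norm (deriv f z))"
    have Nup: "\<nu> w * norm (deriv f w) \<le> N" if "w \<in> unit_disc" for w
      unfolding N_def by (rule Bnorm_facts(2)[OF f nu that])
    have N0: "0 \<le> N" unfolding N_def by (rule Bnorm_facts(3)[OF f nu])
    have NB: "N \<le> B_inf_norm \<nu> f" unfolding N_def by (rule Bnorm_facts(4)[OF f nu])
    define k where "k w = deriv f w * g w" for w
    have kh: "k holomorphic_on unit_disc"
      unfolding k_def[abs_def] by (intro holomorphic_intros holomorphic_deriv fh g open_ball)
    have kc: "continuous_on unit_disc k" by (rule holomorphic_on_imp_continuous_on[OF kh])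
    obtain G where Gd: "\<And>z. z \<in> unit_disc \<Longrightarrow> (G has_field_derivative k z) (at z)"
      and Gi: "\<And>z. z \<in> unit_disc \<Longrightarrow> contour_integral (linepath 0 z) k = G z - G 0"
      using disc_primitive[OF kh] by blast
    have Seq: "S_op g f z = G z - G 0" if "z \<in> unit_disc" for z
      unfolding S_op_def k_def[symmetric] by (rule Gi[OF that])
    have Gh: "G holomorphic_on unit_disc"
      unfolding holomorphic_on_open[OF open_ball] using Gd by blast
    have Sh: "S_op g f holomorphic_on unit_disc"
    proof -
      have "(\<lambda>z. G z - G 0) holomorphic_on unit_disc" by (intro holomorphic_intros Gh)
      then show ?thesis by (rule holomorphic_transform) (simp add: Seq)
    qed
    have bound: "\<mu> z * norm (S_op g f z) \<le> C * B_inf_norm \<nu> f" if z: "z \<in> unit_disc" for z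
    proof (cases "z = 0")
      case True
      have "0 \<le> C * B_inf_norm \<nu> f" using C0 N0 NB by simp
      then show ?thesis unfolding True S_op_def by simp
    next
      case False
      define \<rho> where "\<rho> = norm z"
      define \<theta> where "\<theta> = Arg2pi z"
      define \<zeta> where "\<zeta> = exp (\<i> * complex_of_real \<theta>)"
      have rho0: "0 < \<rho>" and rho1: "\<rho> < 1" unfolding \<rho>_def using False z by auto
      have th: "\<theta> \<in> {0..<2*pi}" unfolding \<theta>_def using Arg2pi_ge_0 Arg2pi_lt_2pi by simp
      have zeq: "z = complex_of_real \<rho> * \<zeta>" unfolding \<rho>_def \<zeta>_def \<theta>_def by (rule Arg2pi_eq)
      define Kf where "Kf r = norm (g (complex_of_real r * \<zeta>)) / \<nu> (complex_of_real r)" for r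
      have ptD: "complex_of_real (\<rho> * u) * \<zeta> \<in> unit_disc" if "u \<in> {0..1}" for u
      proof -
        have E: "complex_of_real (\<rho> * u) * \<zeta> = complex_of_real u * z" unfolding zeq by (simp add: mult_ac)
        show ?thesis unfolding E by (rule seg_in_disc[OF z that])
      qed
      have rD: "complex_of_real (\<rho> * u) \<in> unit_disc" if "u \<in> {0..1}" for u
        using ptD[OF that] unfolding \<zeta>_def by (simp add: norm_mult)
      have "S_op g f z = integral {0..1} (\<lambda>u. k (complex_of_real u * z) * z)"
        unfolding S_op_def k_def[symmetric] by (rule line_int)
      also have "norm \<dots> \<le> integral {0..1} (\<lambda>u. N * (\<rho> * Kf (\<rho> * u)))"
      proof (rule integral_norm_bound_integral)
        show "(\<lambda>u. k (complex_of_real u * z) * z) integrable_on {0..1}"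
          by (intro integrable_continuous_interval continuous_intros continuous_on_compose2[OF kc])
             (use seg_in_disc[OF z] in auto)
        have "continuous_on {0..1} (\<lambda>u. \<nu> (complex_of_real (\<rho> * u)))"
          by (intro continuous_on_compose2[OF nuc] continuous_intros) (use rD in auto)
        moreover have "continuous_on {0..1} (\<lambda>u. g (complex_of_real (\<rho> * u) * \<zeta>))"
          by (intro continuous_on_compose2[OF holomorphic_on_imp_continuous_on[OF g]] continuous_intros) (use ptD in auto)
        ultimately show "(\<lambda>u. N * (\<rho> * Kf (\<rho> * u))) integrable_on {0..1}"
          unfolding Kf_def
          by (intro integrable_continuous_interval continuous_intros) (use rD npos in force)+
      next
        fix u :: real assume u: "u \<in> {0..1}"
        define w where "w = complex_of_real u * z"
        have wD: "w \<in> unit_disc" unfolding w_def by (rule seg_in_disc[OF z u])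
        have w2: "w = complex_of_real (\<rho> * u) * \<zeta>" unfolding w_def zeq by (simp add: mult_ac)
        have nw: "norm w = \<rho> * u" using u rho0 unfolding w2 \<zeta>_def by (simp add: norm_mult)
        have nuw: "\<nu> w = \<nu> (complex_of_real (\<rho> * u))" using nurad[OF wD] nw by simp
        have npw: "0 < \<nu> w" by (rule npos[OF wD])
        have a1: "norm (deriv f w) \<le> N / \<nu> w" using Nup[OF wD] npw by (simp add: pos_le_divide_eq mult.commute)
        have "norm (deriv f w) * norm (g w) * \<rho> \<le> N / \<nu> w * norm (g w) * \<rho>" using a1 rho0 by (intro mult_right_mono) auto
        moreover have "norm (k w * z) = norm (deriv f w) * norm (g w) * \<rho>" unfolding k_def \<rho>_def by (simp add: norm_mult)
        moreover have "N / \<nu> w * norm (g w) * \<rho> = N * (\<rho> * Kf (\<rho> * u))" by (subst nuw) (simp add: Kf_def w2)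
        ultimately show "norm (k (complex_of_real u * z) * z) \<le> N * (\<rho> * Kf (\<rho> * u))" unfolding w_def by simp
      qed
      also have "integral {0..1} (\<lambda>u. N * (\<rho> * Kf (\<rho> * u))) = N * integral {0..\<rho>} Kf"
        using integral_cmul[of "{0..1}" N "\<lambda>u. \<rho> * Kf (\<rho> * u)"] subst01[OF rho0, of Kf] by simp
      finally have Sb: "norm (S_op g f z) \<le> N * integral {0..\<rho>} Kf" .
      have muz: "\<mu> z = \<mu> (complex_of_real \<rho>)" unfolding \<rho>_def by (rule murad[OF z])
      have "\<mu> z * norm (S_op g f z) \<le> \<mu> z * (N * integral {0..\<rho>} Kf)"
        using Sb mupos[OF z] by (rule mult_left_mono)
      also have "\<dots> = N * (\<mu> (complex_of_real \<rho>) * integral {0..\<rho>} Kf)" unfolding muz by simp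
      also have "\<dots> \<le> N * C"
      proof (rule mult_left_mono[OF _ N0])
        show "\<mu> (complex_of_real \<rho>) * integral {0..\<rho>} Kf \<le> C"
          using C rho0 rho1 th unfolding Kf_def \<zeta>_def by simp
      qed
      also have "\<dots> \<le> B_inf_norm \<nu> f * C" by (rule mult_right_mono[OF NB C0])
      finally show ?thesis by (simp add: mult.commute)
    qed
    have "S_op g f \<in> H_inf_w \<mu>" unfolding H_inf_w_def using Sh bound by blast
    then show ?thesis using bound by blast
  qed
  show ?thesis unfolding S_bounded_def using main by blast
qed

lemma necessity:
  fixes g :: "complex \<Rightarrow> complex" and \<nu> \<mu> :: "complex \<Rightarrow> real"
  assumes g: "g holomorphic_on unit_disc" and lg: "log_in_bloch g"
    and nu: "analytic_weight \<nu>" and mu: "is_weight \<mu>" and Sb: "S_bounded g \<nu> \<mu>"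
  shows "\<exists>C. \<forall>t\<in>{0..<1}. \<forall>\<theta>\<in>{0..<2*pi}. \<mu> (complex_of_real t) *
         integral {0..t} (\<lambda>r. norm (g (complex_of_real r * exp (\<i> * complex_of_real \<theta>))) / \<nu> (complex_of_real r)) \<le> C"
proof -
  obtain C where SC: "\<forall>f\<in>B_inf_w \<nu>. S_op g f \<in> H_inf_w \<mu> \<and> (\<forall>z\<in>unit_disc. \<mu> z * norm (S_op g f z) \<le> C * B_inf_norm \<nu> f)"
    using Sb unfolding S_bounded_def by blast
  obtain h where hb: "h \<in> bloch" and hg: "\<forall>z\<in>unit_disc. exp (h z) = g z"
    using lg unfolding log_in_bloch_def by blast
  have hh: "h holomorphic_on unit_disc" using hb unfolding bloch_def by blast
  obtain Bc0 where Bc0: "\<forall>z\<in>unit_disc. (1 - (norm z)^2) * norm (deriv h z) \<le> Bc0"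
    using hb unfolding bloch_def by blast
  define Bc where "Bc = max Bc0 0"
  have Bc: "0 \<le> Bc" unfolding Bc_def by simp
  have bl: "\<forall>z\<in>unit_disc. (1 - (norm z)^2) * norm (deriv h z) \<le> Bc"
    using Bc0 unfolding Bc_def by (meson max.coboundedI1)
  obtain F where Fh: "F holomorphic_on unit_disc"
    and Feq: "\<forall>z\<in>unit_disc. F (complex_of_real (norm z)) = complex_of_real (1 / \<nu> z)"
    and Fb: "\<forall>z\<in>unit_disc. norm (F z) \<le> 1 / \<nu> z"
    using analytic_weight_ex[OF nu] by blast
  have npos: "\<And>z. z \<in> unit_disc \<Longrightarrow> 0 < \<nu> z" by (rule nu_pos[OF nu])
  have nuw: "is_weight \<nu>" using nu unfolding analytic_weight_def by blast
  note nurad = weight_facts(3)[OF nuw]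
  note mupos = weight_facts(2)[OF mu] and murad = weight_facts(3)[OF mu]
  define M where "M = Mc Bc"
  have main: "\<mu> (complex_of_real t) * integral {0..t} (\<lambda>r. norm (g (complex_of_real r * exp (\<i> * complex_of_real \<theta>))) / \<nu> (complex_of_real r)) \<le> 2 * \<bar>C\<bar> * exp M"
    if t0: "0 < t" and t1: "t < 1" for t \<theta>
  proof -
    obtain \<phi> where ph: "\<phi> holomorphic_on unit_disc"
      and pb: "\<And>z. z \<in> unit_disc \<Longrightarrow> norm (\<phi> z) \<le> exp (Mc Bc)"
      and pr: "\<And>r. r \<in> {0..t} \<Longrightarrow> exp (Re (h (of_real r * exp (\<i> * of_real \<theta>)))) / 2
            \<le> Re (\<phi> (of_real r * exp (\<i> * of_real \<theta>)) * exp (h (of_real r * exp (\<i> * of_real \<theta>))))"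
      using test_function[OF hh bl Bc less_imp_le[OF t0] t1, where \<theta>=\<theta>] by blast
    define \<zeta> where "\<zeta> = exp (\<i> * complex_of_real \<theta>)"
    have nz: "norm \<zeta> = 1" unfolding \<zeta>_def by simp
    have cz: "cnj \<zeta> * \<zeta> = 1"
    proof -
      have "\<zeta> * cnj \<zeta> = of_real ((norm \<zeta>)^2)" by (rule complex_norm_square[symmetric])
      then show ?thesis using nz by (simp add: mult.commute)
    qed
    have rotD: "cnj \<zeta> * w \<in> unit_disc" if "w \<in> unit_disc" for w
      using that nz by (simp add: norm_mult)
    define k0 where "k0 w = F (cnj \<zeta> * w) * \<phi> w" for w
    have k0h: "k0 holomorphic_on unit_disc"
    proof -
      have "(F \<circ> (\<lambda>w. cnj \<zeta> * w)) holomorphic_on unit_disc"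
        by (rule holomorphic_on_compose_gen[OF _ Fh]) (auto intro: holomorphic_intros rotD)
      then show ?thesis unfolding k0_def[abs_def] by (intro holomorphic_intros ph) (simp add: o_def)
    qed
    obtain G where Gd: "\<And>z. z \<in> unit_disc \<Longrightarrow> (G has_field_derivative k0 z) (at z)"
      and Gi: "\<And>z. z \<in> unit_disc \<Longrightarrow> contour_integral (linepath 0 z) k0 = G z - G 0"
      using disc_primitive[OF k0h] by blast
    define f where "f z = G z - G 0" for z
    have fd: "(f has_field_derivative k0 z) (at z)" if "z \<in> unit_disc" for z
      unfolding f_def[abs_def] using Gd[OF that] by (auto intro!: derivative_eq_intros)
    have dfk: "deriv f z = k0 z" if "z \<in> unit_disc" for z by (rule DERIV_imp_deriv[OF fd[OF that]])
    have fh: "f holomorphic_on unit_disc"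
      unfolding holomorphic_on_open[OF open_ball] using fd by blast
    have dbound: "\<nu> z * norm (deriv f z) \<le> exp M" if z: "z \<in> unit_disc" for z
    proof -
      have nrot: "norm (cnj \<zeta> * z) = norm z" using nz by (simp add: norm_mult)
      have "\<nu> (cnj \<zeta> * z) = \<nu> z" using nurad[OF rotD[OF z]] nurad[OF z] nrot by simp
      then have "norm (F (cnj \<zeta> * z)) \<le> 1 / \<nu> z" using Fb rotD[OF z] by metis
      moreover have "norm (\<phi> z) \<le> exp M" using pb[OF z] unfolding M_def .
      ultimately have "norm (k0 z) \<le> 1 / \<nu> z * exp M"
        using npos[OF z] unfolding k0_def norm_mult by (intro mult_mono) auto
      then have "\<nu> z * norm (k0 z) \<le> \<nu> z * (1 / \<nu> z * exp M)"
        using npos[OF z] by (intro mult_left_mono) auto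
      then show ?thesis using npos[OF z] dfk[OF z] by simp
    qed
    have fB: "f \<in> B_inf_w \<nu>" unfolding B_inf_w_def using fh dbound by blast
    have Bn: "B_inf_norm \<nu> f \<le> exp M"
    proof -
      have "(SUP z\<in>unit_disc. \<nu> z * norm (deriv f z)) \<le> exp M"
        by (rule cSUP_least) (auto intro: dbound)
      then show ?thesis unfolding B_inf_norm_def f_def by simp
    qed
    have Bn0: "0 \<le> B_inf_norm \<nu> f" using Bnorm_facts(3,4)[OF fB nu] by linarith
    define z0 where "z0 = complex_of_real t * \<zeta>"
    have z0D: "z0 \<in> unit_disc" unfolding z0_def using t0 t1 nz by (simp add: norm_mult)
    have Sup: "\<mu> z0 * norm (S_op g f z0) \<le> \<bar>C\<bar> * exp M"
    proof -
      have "\<mu> z0 * norm (S_op g f z0) \<le> C * B_inf_norm \<nu> f" using SC fB z0D by blast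
      also have "\<dots> \<le> \<bar>C\<bar> * B_inf_norm \<nu> f" using Bn0 by (intro mult_right_mono) auto
      also have "\<dots> \<le> \<bar>C\<bar> * exp M" using Bn by (intro mult_left_mono) auto
      finally show ?thesis .
    qed
    define Kf where "Kf r = norm (g (complex_of_real r * \<zeta>)) / \<nu> (complex_of_real r)" for r
    have ptD: "complex_of_real u * z0 \<in> unit_disc" if "u \<in> {0..1}" for u
      by (rule seg_in_disc[OF z0D that])
    have pteq: "complex_of_real u * z0 = complex_of_real (t * u) * \<zeta>" for u
      unfolding z0_def by (simp add: mult_ac)
    have rD: "complex_of_real (t * u) \<in> unit_disc" if "u \<in> {0..1}" for u
      using ptD[OF that] unfolding pteq using nz by (simp add: norm_mult)
    define J where "J u = k0 (complex_of_real u * z0) * g (complex_of_real u * z0) * z0" for u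
    have Seq: "S_op g f z0 = integral {0..1} J"
    proof -
      have "S_op g f z0 = integral {0..1} (\<lambda>u. deriv f (complex_of_real u * z0) * g (complex_of_real u * z0) * z0)"
        unfolding S_op_def by (rule line_int)
      also have "\<dots> = integral {0..1} J"
        by (rule integral_cong) (simp add: J_def dfk[OF ptD])
      finally show ?thesis .
    qed
    have k0c: "continuous_on unit_disc k0" by (rule holomorphic_on_imp_continuous_on[OF k0h])
    have gc: "continuous_on unit_disc g" by (rule holomorphic_on_imp_continuous_on[OF g])
    have Jc: "continuous_on {0..1} J"
      unfolding J_def
      by (intro continuous_intros continuous_on_compose2[OF k0c] continuous_on_compose2[OF gc])
         (use ptD in auto)
    have Ji: "J integrable_on {0..1}" by (rule integrable_continuous_interval[OF Jc])
    have ReJ: "Re (cnj \<zeta> * J u) = t * (Re (\<phi> (complex_of_real (t * u) * \<zeta>) * g (complex_of_real (t * u) * \<zeta>)) / \<nu> (complex_of_real (t * u)))"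
      if u: "u \<in> {0..1}" for u
    proof -
      have rot: "cnj \<zeta> * (complex_of_real (t * u) * \<zeta>) = complex_of_real (t * u)"
        using cz by (simp add: mult.left_commute)
      have tu: "norm (complex_of_real (t * u)) = t * u" using u t0 by (simp add: abs_mult del: of_real_mult)
      have "F (complex_of_real (t * u)) = complex_of_real (1 / \<nu> (complex_of_real (t * u)))"
        using Feq rD[OF u] tu by metis
      then have "k0 (complex_of_real (t * u) * \<zeta>) = complex_of_real (1 / \<nu> (complex_of_real (t * u))) * \<phi> (complex_of_real (t * u) * \<zeta>)"
        unfolding k0_def rot by simp
      then have "cnj \<zeta> * J u = complex_of_real (t / \<nu> (complex_of_real (t * u))) * (\<phi> (complex_of_real (t * u) * \<zeta>) * g (complex_of_real (t * u) * \<zeta>)) * (cnj \<zeta> * \<zeta>)"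
        unfolding J_def pteq z0_def by (simp add: mult_ac)
      then show ?thesis unfolding cz by simp
    qed
    have low: "t * Kf (t * u) / 2 \<le> Re (cnj \<zeta> * J u)" if u: "u \<in> {0..1}" for u
    proof -
      let ?w = "complex_of_real (t * u) * \<zeta>"
      have wD: "?w \<in> unit_disc" using ptD[OF u] unfolding pteq .
      have tu: "t * u \<in> {0..t}" using u t0 by (auto simp: mult_left_le_one_le)
      have "exp (Re (h ?w)) / 2 \<le> Re (\<phi> ?w * exp (h ?w))" using pr[OF tu] unfolding \<zeta>_def by simp
      moreover have "exp (h ?w) = g ?w" using hg wD by blast
      moreover have "norm (g ?w) = exp (Re (h ?w))" using hg wD by (metis norm_exp_eq_Re)
      ultimately have a: "norm (g ?w) / 2 \<le> Re (\<phi> ?w * g ?w)" by simp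
      have np: "0 < \<nu> (complex_of_real (t * u))" by (rule npos[OF rD[OF u]])
      have "t * Kf (t * u) / 2 = t * ((norm (g ?w) / 2) / \<nu> (complex_of_real (t * u)))"
        unfolding Kf_def by simp
      also have "\<dots> \<le> t * (Re (\<phi> ?w * g ?w) / \<nu> (complex_of_real (t * u)))"
        using a np t0 by (intro mult_left_mono divide_right_mono) auto
      also have "\<dots> = Re (cnj \<zeta> * J u)" using ReJ[OF u] by simp
      finally show ?thesis .
    qed
    have Kc: "continuous_on {0..1} (\<lambda>u. t * Kf (t * u) / 2)"
    proof -
      have "continuous_on {0..1} (\<lambda>u. \<nu> (complex_of_real (t * u)))"
        by (intro continuous_on_compose2[OF weight_facts(1)[OF nuw]] continuous_intros) (use rD in auto)
      moreover have "continuous_on {0..1} (\<lambda>u. g (complex_of_real (t * u) * \<zeta>))"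
        by (intro continuous_on_compose2[OF gc] continuous_intros) (use ptD pteq in auto)
      ultimately show ?thesis unfolding Kf_def
        by (intro continuous_intros) (use rD npos in force)+
    qed
    have "integral {0..1} (\<lambda>u. t * Kf (t * u) / 2) \<le> integral {0..1} (\<lambda>u. Re (cnj \<zeta> * J u))"
    proof (rule integral_le)
      show "(\<lambda>u. t * Kf (t * u) / 2) integrable_on {0..1}" by (rule integrable_continuous_interval[OF Kc])
      show "(\<lambda>u. Re (cnj \<zeta> * J u)) integrable_on {0..1}"
        by (intro integrable_continuous_interval continuous_intros Jc)
    qed (rule low)
    also have "integral {0..1} (\<lambda>u. Re (cnj \<zeta> * J u)) = Re (cnj \<zeta> * integral {0..1} J)"
    proof -
      have "integral {0..1} (\<lambda>u. Re (cnj \<zeta> * J u)) = Re (integral {0..1} (\<lambda>u. cnj \<zeta> * J u))"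
        using integral_linear[OF integrable_on_mult_right[OF Ji] bounded_linear_Re] unfolding o_def .
      also have "integral {0..1} (\<lambda>u. cnj \<zeta> * J u) = cnj \<zeta> * integral {0..1} J"
        by (rule integral_mult_right_HK[OF Ji])
      finally show ?thesis .
    qed
    also have "\<dots> \<le> norm (cnj \<zeta> * integral {0..1} J)" by (rule complex_Re_le_cmod)
    also have "\<dots> = norm (S_op g f z0)" unfolding Seq norm_mult using nz by simp
    finally have i1: "integral {0..1} (\<lambda>u. t * Kf (t * u) / 2) \<le> norm (S_op g f z0)" .
    have "integral {0..1} (\<lambda>u. t * Kf (t * u) / 2) = integral {0..t} Kf / 2"
      using integral_cmul[of "{0..1}" "1/2" "\<lambda>u. t * Kf (t * u)"] subst01[OF t0, of Kf] by simp
    with i1 have i2: "integral {0..t} Kf \<le> 2 * norm (S_op g f z0)" by simp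
    have muz: "\<mu> z0 = \<mu> (complex_of_real t)"
      using murad[OF z0D] unfolding z0_def using nz t0 by (simp add: norm_mult)
    have "\<mu> (complex_of_real t) * integral {0..t} Kf \<le> \<mu> (complex_of_real t) * (2 * norm (S_op g f z0))"
      using i2 mupos[OF z0D] muz by (intro mult_left_mono) auto
    also have "\<dots> = 2 * (\<mu> z0 * norm (S_op g f z0))" using muz by simp
    also have "\<dots> \<le> 2 * (\<bar>C\<bar> * exp M)" using Sup by simp
    finally show ?thesis unfolding Kf_def \<zeta>_def by simp
  qed
  show ?thesis
  proof (intro exI ballI)
    fix t \<theta> :: real assume t: "t \<in> {0..<1}" and th: "\<theta> \<in> {0..<2*pi}"
    show "\<mu> (complex_of_real t) * integral {0..t} (\<lambda>r. norm (g (complex_of_real r * exp (\<i> * complex_of_real \<theta>))) / \<nu> (complex_of_real r)) \<le> 2 * \<bar>C\<bar> * exp M"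
    proof (cases "t = 0")
      case True
      then show ?thesis by simp
    next
      case False
      then show ?thesis using main[of t \<theta>] t by simp
    qed
  qed
qed

theorem proposition2:
  fixes g :: "complex \<Rightarrow> complex" and \<nu> \<mu> :: "complex \<Rightarrow> real"
  assumes "g holomorphic_on unit_disc"
    and "log_in_bloch g"
    and "analytic_weight \<nu>"
    and "is_weight \<mu>"
  shows "S_bounded g \<nu> \<mu> \<longleftrightarrow>
    (\<exists>C. \<forall>t\<in>{0..<1}. \<forall>\<theta>\<in>{0..<2*pi}.
       \<mu> (complex_of_real t) *
         integral {0..t} (\<lambda>r. norm (g (complex_of_real r * exp (\<i> * complex_of_real \<theta>))) / \<nu> (complex_of_real r))
       \<le> C)"
proof
  assume "S_bounded g \<nu> \<mu>"
  then show "\<exists>C. \<forall>t\<in>{0..<1}. \<forall>\<theta>\<in>{0..<2*pi}.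
       \<mu> (complex_of_real t) *
         integral {0..t} (\<lambda>r. norm (g (complex_of_real r * exp (\<i> * complex_of_real \<theta>))) / \<nu> (complex_of_real r))
       \<le> C"
    by (rule necessity[OF assms(1) assms(2) assms(3) assms(4)])
next
  assume "\<exists>C. \<forall>t\<in>{0..<1}. \<forall>\<theta>\<in>{0..<2*pi}.
       \<mu> (complex_of_real t) *
         integral {0..t} (\<lambda>r. norm (g (complex_of_real r * exp (\<i> * complex_of_real \<theta>))) / \<nu> (complex_of_real r))
       \<le> C"
  then obtain C where C: "\<forall>t\<in>{0..<1}. \<forall>\<theta>\<in>{0..<2*pi}.
       \<mu> (complex_of_real t) *
         integral {0..t} (\<lambda>r. norm (g (complex_of_real r * exp (\<i> * complex_of_real \<theta>))) / \<nu> (complex_of_real r))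
       \<le> C" by blast
  show "S_bounded g \<nu> \<mu>" by (rule sufficiency[OF assms(1) assms(3) assms(4) C])
qed

end
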